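(* Let $\mathbb{V}$ be a finite-dimensional real inner product space, $\mathcal{C}\subseteq\mathbb{V}$ a convex set, $\varphi:\mathbb{V}\to\mathbb{R}\cup\{+\infty\}$ a Legendre function, and $f:\mathcal{C}\to\mathbb{R}$ a function differentiable on $\operatorname{relint}\mathcal{C}$ satisfying $f(x)=\langle x,\nabla f(x)\rangle$ for all $x\in\mathcal{C}$. Then $f$ is $L$-smooth relative to $\varphi$ on $\mathcal{C}$ if and only if $$\langle x,\nabla f(x)-\nabla f(y)\rangle\le L\,D_\varphi(x\,\|\,y)\qquad\text{for all }x,y\in\operatorname{relint}\mathcal{C}.$$ Similarly, $f$ is $\mu$-strongly convex relative to $\varphi$ on $\mathcal{C}$ if and only if $$\langle x,\nabla f(x)-\nabla f(y)\rangle\ge \mu\,D_\varphi(x\,\|\,y)\qquad\text{for all }x,y\in\operatorname{relint}\mathcal{C}.$$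
   Context: A function $\varphi:\mathbb{V}\to\mathbb{R}\cup\{+\infty\}$ is Legendre if it is proper, lower semicontinuous, strictly convex and essentially smooth. Its Bregman divergence is $D_\varphi(x\,\|\,y)=\varphi(x)-\varphi(y)-\langle\nabla\varphi(y),x-y\rangle$ for $x\in\operatorname{dom}\varphi$, $y\in\operatorname{relint}\operatorname{dom}\varphi$ (here $\mathcal{C}\subseteq\operatorname{dom}\varphi$). $f$ is $L$-smooth relative to $\varphi$ on $\mathcal{C}$ (for $L>0$) if $L\varphi-f$ is convex on $\operatorname{relint}\mathcal{C}$; $f$ is $\mu$-strongly convex relative to $\varphi$ on $\mathcal{C}$ (for $\mu>0$) if $f-\mu\varphi$ is convex on $\operatorname{relint}\mathcal{C}$. *)

theory Defs
  imports "HOL-Analysis.Analysis"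
begin

text \<open>Extended-real valued functions \<open>\<phi> :: 'a \<Rightarrow> ereal\<close> model functions into
  \<open>\<real> \<union> {+\<infinity>}\<close> (properness rules out the value \<open>-\<infinity>\<close>).\<close>

definition edom :: "('a \<Rightarrow> ereal) \<Rightarrow> 'a set" where
  "edom \<phi> = {x. \<phi> x < \<infinity>}"

definition proper_fun :: "('a \<Rightarrow> ereal) \<Rightarrow> bool" where
  "proper_fun \<phi> \<longleftrightarrow> (\<forall>x. \<phi> x \<noteq> -\<infinity>) \<and> (\<exists>x. \<phi> x < \<infinity>)"

definition lsc_fun :: "('a::topological_space \<Rightarrow> ereal) \<Rightarrow> bool" where
  "lsc_fun \<phi> \<longleftrightarrow> (\<forall>x. \<phi> x \<le> Liminf (at x) \<phi>)"

text \<open>Strict convexity of an extended-valued function: its domain is convex and the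
  strict convexity inequality holds between distinct points of the domain
  (outside the domain the right-hand side is \<open>+\<infinity>\<close>).\<close>
definition strictly_convex_fun :: "('a::real_vector \<Rightarrow> ereal) \<Rightarrow> bool" where
  "strictly_convex_fun \<phi> \<longleftrightarrow> convex (edom \<phi>) \<and>
     (\<forall>x\<in>edom \<phi>. \<forall>y\<in>edom \<phi>. \<forall>t::real. x \<noteq> y \<and> 0 < t \<and> t < 1 \<longrightarrow>
        real_of_ereal (\<phi> (t *\<^sub>R x + (1 - t) *\<^sub>R y))
          < t * real_of_ereal (\<phi> x) + (1 - t) * real_of_ereal (\<phi> y))"

definition egrad :: "('a::euclidean_space \<Rightarrow> ereal) \<Rightarrow> 'a \<Rightarrow> 'a" where
  "egrad \<phi> y = (SOME v. ((\<lambda>z. real_of_ereal (\<phi> z)) has_derivative (\<lambda>h. v \<bullet> h)) (at y))"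

definition ediff_at :: "('a::euclidean_space \<Rightarrow> ereal) \<Rightarrow> 'a \<Rightarrow> bool" where
  "ediff_at \<phi> y \<longleftrightarrow> (\<exists>v. ((\<lambda>z. real_of_ereal (\<phi> z)) has_derivative (\<lambda>h. v \<bullet> h)) (at y))"

definition essentially_smooth :: "('a::euclidean_space \<Rightarrow> ereal) \<Rightarrow> bool" where
  "essentially_smooth \<phi> \<longleftrightarrow>
     interior (edom \<phi>) \<noteq> {} \<and>
     (\<forall>y\<in>interior (edom \<phi>). ediff_at \<phi> y) \<and>
     (\<forall>xs b. (\<forall>k. xs k \<in> interior (edom \<phi>)) \<and> xs \<longlonglongrightarrow> b \<and> b \<in> frontier (interior (edom \<phi>))
        \<longrightarrow> filterlim (\<lambda>k. norm (egrad \<phi> (xs k))) at_top sequentially)"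

definition legendre :: "('a::euclidean_space \<Rightarrow> ereal) \<Rightarrow> bool" where
  "legendre \<phi> \<longleftrightarrow> proper_fun \<phi> \<and> lsc_fun \<phi> \<and> strictly_convex_fun \<phi> \<and> essentially_smooth \<phi>"

definition bregman :: "('a::euclidean_space \<Rightarrow> ereal) \<Rightarrow> 'a \<Rightarrow> 'a \<Rightarrow> real" where
  "bregman \<phi> x y = real_of_ereal (\<phi> x) - real_of_ereal (\<phi> y) - egrad \<phi> y \<bullet> (x - y)"

definition rel_smooth :: "real \<Rightarrow> ('a::euclidean_space \<Rightarrow> real) \<Rightarrow> ('a \<Rightarrow> ereal) \<Rightarrow> 'a set \<Rightarrow> bool" where
  "rel_smooth L f \<phi> C \<longleftrightarrow> convex_on (rel_interior C) (\<lambda>x. L * real_of_ereal (\<phi> x) - f x)"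

definition rel_strongly_convex :: "real \<Rightarrow> ('a::euclidean_space \<Rightarrow> real) \<Rightarrow> ('a \<Rightarrow> ereal) \<Rightarrow> 'a set \<Rightarrow> bool" where
  "rel_strongly_convex \<mu> f \<phi> C \<longleftrightarrow> convex_on (rel_interior C) (\<lambda>x. f x - \<mu> * real_of_ereal (\<phi> x))"

end

theory Submission imports Defs begin

lemma tangent_ineq:
  fixes h :: "'a::euclidean_space \<Rightarrow> real"
  assumes S: "convex S" and cv: "convex_on S h" and x: "x \<in> S" and y: "y \<in> S"
    and d: "(h has_derivative (\<lambda>v. g \<bullet> v)) (at y within S)"
  shows "h y + g \<bullet> (x - y) \<le> h x"
proof -
  define p where "p = (\<lambda>t::real. y + t *\<^sub>R (x - y))"
  have pS: "p t \<in> S" if "t \<in> {0..1}" for t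
  proof -
    have "p t = (1 - t) *\<^sub>R y + t *\<^sub>R x" by (simp add: p_def algebra_simps)
    then show ?thesis using convexD_alt[OF S y x] that by auto
  qed
  have dp: "(p has_derivative (\<lambda>t. t *\<^sub>R (x - y))) (at 0 within {0..1})"
    unfolding p_def by (auto intro!: derivative_eq_intros)
  have p0: "p 0 = y" by (simp add: p_def)
  have dh: "(h has_derivative (\<lambda>v. g \<bullet> v)) (at (p 0) within p ` {0..1})"
  proof -
    have "p ` {0..1} \<subseteq> S" using pS by auto
    then show ?thesis using has_derivative_subset[OF d, of "p ` {0..1}"] p0 by simp
  qed
  have "((h \<circ> p) has_derivative ((\<lambda>v. g \<bullet> v) \<circ> (\<lambda>t. t *\<^sub>R (x - y)))) (at 0 within {0..1})"
    by (rule diff_chain_within[OF dp dh])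
  moreover have "((\<lambda>v. g \<bullet> v) \<circ> (\<lambda>t. t *\<^sub>R (x - y))) = (*) (g \<bullet> (x - y))"
    by (auto simp: fun_eq_iff)
  ultimately have "((h \<circ> p) has_field_derivative (g \<bullet> (x - y))) (at 0 within {0..1})"
    by (simp add: has_field_derivative_def)
  then have lim: "((\<lambda>t. ((h \<circ> p) t - (h \<circ> p) 0) / (t - 0)) \<longlongrightarrow> g \<bullet> (x - y)) (at_right 0)"
    using at_within_Icc_at_right[of "0::real" 1] has_field_derivative_iff[of "h \<circ> p" "g \<bullet> (x - y)" 0 "{0..1}"]
    by simp
  have key: "((h \<circ> p) t - (h \<circ> p) 0) / (t - 0) \<le> h x - h y" if t: "t \<in> {0<..<1}" for t :: real
  proof -
    have "p t = (1 - t) *\<^sub>R y + t *\<^sub>R x" by (simp add: p_def algebra_simps)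
    then have "h (p t) \<le> (1 - t) * h y + t * h x"
      using convex_onD[OF cv, of t y x] t x y by simp
    then have "h (p t) - h y \<le> t * (h x - h y)" by (simp add: algebra_simps)
    then show ?thesis
      using t p0 by (simp add: divide_le_eq mult.commute)
  qed
  have ev: "eventually (\<lambda>t. ((h \<circ> p) t - (h \<circ> p) 0) / (t - 0) \<le> h x - h y) (at_right 0)"
    using eventually_at_right_real[of "0::real" 1] key by (auto elim: eventually_mono)
  have "g \<bullet> (x - y) \<le> h x - h y"
    using tendsto_upperbound[OF lim ev] by simp
  then show ?thesis by simp
qed

lemma tangent_ineq_converse:
  fixes h :: "'a::euclidean_space \<Rightarrow> real"
  assumes S: "convex S" and H: "\<And>x y. x \<in> S \<Longrightarrow> y \<in> S \<Longrightarrow> h y + G y \<bullet> (x - y) \<le> h x"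
  shows "convex_on S h"
proof (rule convex_onI[OF _ S])
  fix t :: real and x y assume t: "0 < t" "t < 1" and x: "x \<in> S" and y: "y \<in> S"
  define z where "z = (1 - t) *\<^sub>R x + t *\<^sub>R y"
  have z: "z \<in> S" unfolding z_def using convexD[OF S x y, of "1 - t" t] t by simp
  have 1: "h z + G z \<bullet> (x - z) \<le> h x" using H[OF x z] .
  have 2: "h z + G z \<bullet> (y - z) \<le> h y" using H[OF y z] .
  have "(1 - t) * (h z + G z \<bullet> (x - z)) + t * (h z + G z \<bullet> (y - z)) \<le> (1 - t) * h x + t * h y"
    using 1 2 t by (intro add_mono mult_left_mono) auto
  moreover have "(1 - t) * (h z + G z \<bullet> (x - z)) + t * (h z + G z \<bullet> (y - z)) = h z"
  proof -
    have "(1 - t) *\<^sub>R (x - z) + t *\<^sub>R (y - z) = 0" by (simp add: z_def algebra_simps)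
    then have "G z \<bullet> ((1 - t) *\<^sub>R (x - z) + t *\<^sub>R (y - z)) = 0" by simp
    then show ?thesis by (simp add: inner_add_right algebra_simps)
  qed
  ultimately show "h ((1 - t) *\<^sub>R x + t *\<^sub>R y) \<le> (1 - t) * h x + t * h y" by (simp add: z_def)
qed

lemma convex_iff_tangent:
  fixes h :: "'a::euclidean_space \<Rightarrow> real"
  assumes S: "convex S"
    and d: "\<And>y. y \<in> S \<Longrightarrow> (h has_derivative (\<lambda>v. G y \<bullet> v)) (at y within S)"
  shows "convex_on S h \<longleftrightarrow> (\<forall>x\<in>S. \<forall>y\<in>S. h y + G y \<bullet> (x - y) \<le> h x)"
  using tangent_ineq[OF S _ _ _ d] tangent_ineq_converse[OF S] by blast

theorem mainTheorem3:
  fixes \<phi> :: "'a::euclidean_space \<Rightarrow> ereal"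
    and f :: "'a \<Rightarrow> real" and gf :: "'a \<Rightarrow> 'a"
    and C :: "'a set" and L \<mu> :: real
  assumes "convex C"
    and "legendre \<phi>"
    and "C \<subseteq> edom \<phi>"
    and "rel_interior C \<subseteq> interior (edom \<phi>)"
    and grad: "\<And>x. x \<in> rel_interior C \<Longrightarrow> (f has_derivative (\<lambda>h. gf x \<bullet> h)) (at x within rel_interior C)"
    and homog: "\<And>x. x \<in> rel_interior C \<Longrightarrow> f x = x \<bullet> gf x"
    and "L > 0" and "\<mu> > 0"
  shows "(rel_smooth L f \<phi> C \<longleftrightarrow>
            (\<forall>x\<in>rel_interior C. \<forall>y\<in>rel_interior C. x \<bullet> (gf x - gf y) \<le> L * bregman \<phi> x y))
       \<and> (rel_strongly_convex \<mu> f \<phi> C \<longleftrightarrow>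
            (\<forall>x\<in>rel_interior C. \<forall>y\<in>rel_interior C. x \<bullet> (gf x - gf y) \<ge> \<mu> * bregman \<phi> x y))"
proof -
  let ?S = "rel_interior C"
  let ?p = "\<lambda>z. real_of_ereal (\<phi> z)"
  have S: "convex ?S" using assms(1) by (rule convex_rel_interior)
  have dphi: "(?p has_derivative (\<lambda>v. egrad \<phi> y \<bullet> v)) (at y within ?S)" if y: "y \<in> ?S" for y
  proof -
    have "ediff_at \<phi> y" using assms(2,4) y unfolding legendre_def essentially_smooth_def by blast
    then have "(?p has_derivative (\<lambda>v. egrad \<phi> y \<bullet> v)) (at y)"
      unfolding ediff_at_def egrad_def by (rule someI_ex)
    then show ?thesis by (rule has_derivative_at_withinI)
  qed
  have d1: "((\<lambda>x. L * ?p x - f x) has_derivative (\<lambda>v. (L *\<^sub>R egrad \<phi> y - gf y) \<bullet> v)) (at y within ?S)"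
    if y: "y \<in> ?S" for y
    by (rule has_derivative_eq_rhs[OF has_derivative_diff[OF has_derivative_mult_right[OF dphi[OF y]] grad[OF y]]])
       (auto simp: fun_eq_iff inner_diff_left)
  have d2: "((\<lambda>x. f x - \<mu> * ?p x) has_derivative (\<lambda>v. (gf y - \<mu> *\<^sub>R egrad \<phi> y) \<bullet> v)) (at y within ?S)"
    if y: "y \<in> ?S" for y
    by (rule has_derivative_eq_rhs[OF has_derivative_diff[OF grad[OF y] has_derivative_mult_right[OF dphi[OF y]]]])
       (auto simp: fun_eq_iff inner_diff_left)
  have e1: "((L * ?p y - f y) + (L *\<^sub>R egrad \<phi> y - gf y) \<bullet> (x - y) \<le> L * ?p x - f x)
      \<longleftrightarrow> x \<bullet> (gf x - gf y) \<le> L * bregman \<phi> x y" if x: "x \<in> ?S" and y: "y \<in> ?S" for x y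
    using homog[OF x] homog[OF y]
    by (simp add: bregman_def inner_diff_left inner_diff_right inner_commute algebra_simps)
  have e2: "((f y - \<mu> * ?p y) + (gf y - \<mu> *\<^sub>R egrad \<phi> y) \<bullet> (x - y) \<le> f x - \<mu> * ?p x)
      \<longleftrightarrow> x \<bullet> (gf x - gf y) \<ge> \<mu> * bregman \<phi> x y" if x: "x \<in> ?S" and y: "y \<in> ?S" for x y
    using homog[OF x] homog[OF y]
    by (simp add: bregman_def inner_diff_left inner_diff_right inner_commute algebra_simps)
  show ?thesis
    unfolding rel_smooth_def rel_strongly_convex_def
    using convex_iff_tangent[OF S d1] convex_iff_tangent[OF S d2] e1 e2 by simp
qed

end
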